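(* Let $n>2$ be a natural number and let $R$ be a de Groot continuum with two distinct points $b_1,b_2$. Let $Y_n=(\mathbb{Z}(n)\times R)/\rho$, where $\mathbb{Z}(n)=\mathbb{Z}/n\mathbb{Z}$ is discrete and $\rho$ is the equivalence relation whose only nontrivial identifications are $(k+n\mathbb{Z},b_2)\sim(k+1+n\mathbb{Z},b_1)$ for all $k\in\mathbb{Z}$. Then $Y_n$ is a continuum whose homeomorphism group $\mathcal{H}(Y_n)$ is isomorphic to the cyclic group $\mathbb{Z}/n\mathbb{Z}$; the isomorphism is given by letting $m\in\mathbb{Z}$ act via $\rho(k+n\mathbb{Z},x)\mapsto\rho(m+k+n\mathbb{Z},x)$.
   Context: A de Groot continuum (rigid continuum) is a compact connected metric space $R$ with more than one point such that every continuous map $R\to R$ is either the identity map or a constant map. $\mathcal{H}(Y)$ denotes the group of all homeomorphisms of a space $Y$ onto itself. The space $Y_n$ is the realisation of the directed $n$-cycle (Cayley graph of $(\mathbb{Z}(n),\{1+n\mathbb{Z}\})$) obtained by inserting a copy of $R$ into each oriented edge, $b_1$ glued to the origin and $b_2$ to the target. *)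

theory Defs
  imports "HOL-Analysis.Analysis" "HOL-Algebra.Elementary_Groups"
begin

definition de_Groot_continuum :: "'a::metric_space set \<Rightarrow> bool" where
  "de_Groot_continuum R \<longleftrightarrow>
     compact R \<and> connected R \<and> (\<exists>x\<in>R. \<exists>y\<in>R. x \<noteq> y) \<and>
     (\<forall>f. continuous_on R f \<and> f ` R \<subseteq> R \<longrightarrow>
          (\<forall>x\<in>R. f x = x) \<or> (\<exists>c. \<forall>x\<in>R. f x = c))"

definition continuum_space :: "'a topology \<Rightarrow> bool" where
  "continuum_space X \<longleftrightarrow>
     topspace X \<noteq> {} \<and> compact_space X \<and> connected_space X \<and> metrizable_space X"

definition quotient_topology :: "'a topology \<Rightarrow> ('a \<times> 'a) set \<Rightarrow> 'a set topology" where
  "quotient_topology X r =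
     topology (\<lambda>U. U \<subseteq> topspace X // r \<and> openin X (\<Union>U))"

text \<open>Z(n) x R with Z(n) = {0..<n} discrete (representatives of residues mod n).\<close>
definition ZR_space :: "nat \<Rightarrow> 'a::metric_space set \<Rightarrow> (int \<times> 'a) topology" where
  "ZR_space n R = prod_topology (discrete_topology {0..<int n}) (top_of_set R)"

definition rho :: "nat \<Rightarrow> 'a::metric_space set \<Rightarrow> 'a \<Rightarrow> 'a \<Rightarrow> ((int \<times> 'a) \<times> (int \<times> 'a)) set" where
  "rho n R b1 b2 =
     {(p, q). p \<in> {0..<int n} \<times> R \<and> q \<in> {0..<int n} \<times> R \<and>
       (p = q \<or>
        (\<exists>k. p = (k, b2) \<and> q = ((k + 1) mod int n, b1)) \<or>
        (\<exists>k. q = (k, b2) \<and> p = ((k + 1) mod int n, b1)))}"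

definition Y_space :: "nat \<Rightarrow> 'a::metric_space set \<Rightarrow> 'a \<Rightarrow> 'a \<Rightarrow> (int \<times> 'a) set topology" where
  "Y_space n R b1 b2 = quotient_topology (ZR_space n R) (rho n R b1 b2)"

definition homeo_group :: "'b topology \<Rightarrow> ('b \<Rightarrow> 'b) monoid" where
  "homeo_group Y =
     \<lparr>carrier = {h \<in> extensional (topspace Y). homeomorphic_map Y Y h},
      mult = (\<lambda>g h. compose (topspace Y) g h),
      one = (\<lambda>x \<in> topspace Y. x)\<rparr>"

definition Y_shift :: "nat \<Rightarrow> 'a::metric_space set \<Rightarrow> 'a \<Rightarrow> 'a \<Rightarrow> int \<Rightarrow> (int \<times> 'a) set \<Rightarrow> (int \<times> 'a) set" where
  "Y_shift n R b1 b2 m =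
     (\<lambda>c \<in> topspace (Y_space n R b1 b2). {((m + k) mod int n, x) | k x. (k, x) \<in> c})"

end

theory Submission
  imports Defs
begin

lemma mod_succ: fixes k N :: int
  assumes "0 \<le> k" "k < N" shows "(k+1) mod N = (if k+1 = N then 0 else k+1)"
  using assms by (auto simp: mod_pos_pos_trivial)

lemma mod_succ_inj: fixes k j N :: int
  assumes "0 \<le> k" "k < N" "0 \<le> j" "j < N" "(k+1) mod N = (j+1) mod N" shows "k = j"
  using assms by (auto simp: mod_succ split: if_splits)

definition cdist :: "('a::metric_space \<times> real) \<Rightarrow> ('a \<times> real) \<Rightarrow> real" where
  "cdist p q = \<bar>snd p - snd q\<bar> + min \<bar>snd p\<bar> \<bar>snd q\<bar> * min 1 (dist (fst p) (fst q))"

definition cM :: "'a \<Rightarrow> ('a \<times> real) set" where "cM a = {p. snd p > 0} \<union> {(a,0)}"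

lemma cone_ineq:
  fixes s t u A B Cc :: real
  assumes "0 \<le> s" "0 \<le> t" "0 \<le> u" "0 \<le> A" "0 \<le> B" "0 \<le> Cc" "Cc \<le> 1" "Cc \<le> A + B"
  shows "\<bar>s - u\<bar> + min s u * Cc \<le> (\<bar>s - t\<bar> + min s t * A) + (\<bar>t - u\<bar> + min t u * B)"
proof (cases "t \<ge> min s u")
  case True
  have "min s u * Cc \<le> min s u * A + min s u * B"
    using assms by (metis distrib_left min.cobounded1 min_def mult_left_mono order_trans)
  also have "... \<le> min s t * A + min t u * B"
    using True assms by (intro add_mono mult_right_mono) auto
  finally show ?thesis by linarith
next
  case False
  then have "(min s u - t) * Cc \<le> (min s u - t) * 1" using assms by (intro mult_left_mono) auto
  moreover have "t * Cc \<le> t * A + t * B" using assms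
    by (metis distrib_left mult_left_mono)
  ultimately show ?thesis using False assms
    by (auto simp: min_def abs_if algebra_simps split: if_splits)
qed

lemma cone_metric: "Metric_space (cM a) cdist"
proof
  fix x y :: "'a \<times> real"
  show "0 \<le> cdist x y" unfolding cdist_def by simp
  show "cdist x y = cdist y x" unfolding cdist_def by (simp add: dist_commute min.commute abs_minus_commute)
next
  fix x y :: "'a \<times> real" assume "x \<in> cM a" "y \<in> cM a"
  then show "(cdist x y = 0) = (x = y)" unfolding cdist_def cM_def
    by (cases x; cases y) (auto simp: add_nonneg_eq_0_iff min_def split: if_splits)
next
  fix x y z :: "'a \<times> real" assume xyz: "x \<in> cM a" "y \<in> cM a" "z \<in> cM a"
  obtain x1 x2 y1 y2 z1 z2 where p: "x = (x1,x2)" "y = (y1,y2)" "z = (z1,z2)" by (metis prod.exhaust)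
  have nn: "0 \<le> x2" "0 \<le> y2" "0 \<le> z2" using xyz p unfolding cM_def by auto
  have tri: "min 1 (dist x1 z1) \<le> min 1 (dist x1 y1) + min 1 (dist y1 z1)"
  proof -
    have g: "\<And>a b c::real. 0\<le>a \<Longrightarrow> 0\<le>b \<Longrightarrow> c \<le> a+b \<Longrightarrow> min 1 c \<le> min 1 a + min 1 b"
      by (auto simp: min_def)
    show ?thesis by (rule g) (auto intro: dist_triangle)
  qed
  show "cdist x z \<le> cdist x y + cdist y z"
    unfolding cdist_def p using cone_ineq[OF nn(1) nn(2) nn(3) _ _ _ _ tri] nn by simp
qed

lemma cone_cont:
  fixes w :: "'a::metric_space \<Rightarrow> real"
  assumes wc: "continuous_on UNIV w" and wnn: "\<And>x. w x \<ge> 0"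
  shows "continuous_map (top_of_set R) (Metric_space.mtopology (cM a) cdist)
           (\<lambda>x. if 0 < w x then (x, w x) else (a,0))"
proof -
  interpret M: Metric_space "cM a" cdist by (rule cone_metric)
  let ?p = "\<lambda>x. if 0 < w x then (x, w x) else (a,0)"
  have inM: "?p x \<in> cM a" for x unfolding cM_def by auto
  show ?thesis unfolding M.continuous_map_to_metric
  proof (intro ballI allI impI)
    fix x0 and \<epsilon> :: real assume x0: "x0 \<in> topspace (top_of_set R)" and ep: "0 < \<epsilon>"
    show "\<exists>U. openin (top_of_set R) U \<and> x0 \<in> U \<and> (\<forall>y\<in>U. ?p y \<in> M.mball (?p x0) \<epsilon>)"
    proof (cases "0 < w x0")
      case True
      define s0 where "s0 = w x0"
      define \<delta> where "\<delta> = min (s0/2) (\<epsilon>/(2*(1+s0)))"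
      have s0: "0 < s0" using True s0_def by simp
      have d0: "0 < \<delta>" using s0 ep unfolding \<delta>_def by auto
      have dle: "\<delta> * (1 + s0) \<le> \<epsilon>/2"
      proof -
        have "\<delta> \<le> \<epsilon>/(2*(1+s0))" unfolding \<delta>_def by simp
        then have "\<delta> * (1+s0) \<le> \<epsilon>/(2*(1+s0)) * (1+s0)" using s0 by (intro mult_right_mono) auto
        also have "... = \<epsilon>/2" using s0 by (simp add: field_simps)
        finally show ?thesis .
      qed
      let ?U = "R \<inter> (w -` ball s0 \<delta> \<inter> ball x0 \<delta>)"
      have "open (w -` ball s0 \<delta> \<inter> ball x0 \<delta>)" using wc by (intro open_Int open_vimage) auto
      then have "openin (top_of_set R) ?U" by auto
      moreover have "x0 \<in> ?U" using x0 d0 s0_def by auto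
      moreover have "?p y \<in> M.mball (?p x0) \<epsilon>" if y: "y \<in> ?U" for y
      proof -
        have a1: "\<bar>s0 - w y\<bar> < \<delta>" using y by (auto simp: dist_real_def)
        have a2: "dist x0 y < \<delta>" using y by auto
        have "\<bar>s0 - w y\<bar> < s0/2" using a1 unfolding \<delta>_def by auto
        then have wy: "0 < w y" by linarith
        have "min \<bar>s0\<bar> \<bar>w y\<bar> * min 1 (dist x0 y) \<le> s0 * \<delta>"
          using s0 a2 by (intro mult_mono) auto
        then have "cdist (x0, s0) (y, w y) < \<delta> + s0 * \<delta>" using a1 unfolding cdist_def by simp
        also have "... \<le> \<epsilon>/2" using dle by (simp add: algebra_simps)
        finally have "cdist (x0, s0) (y, w y) < \<epsilon>" using ep by simp
        moreover have "(x0, w x0) \<in> cM a" "(y, w y) \<in> cM a" using True wy by (auto simp: cM_def)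
        ultimately show ?thesis using True wy s0_def by simp
      qed
      ultimately show ?thesis by blast
    next
      case False
      then have w0: "w x0 = 0" using wnn[of x0] by simp
      let ?U = "R \<inter> (w -` ball 0 \<epsilon>)"
      have "open (w -` ball 0 \<epsilon>)" using wc by (intro open_vimage) auto
      then have "openin (top_of_set R) ?U" by auto
      moreover have "x0 \<in> ?U" using x0 ep w0 by auto
      moreover have "?p y \<in> M.mball (?p x0) \<epsilon>" if y: "y \<in> ?U" for y
      proof -
        have "w y < \<epsilon>" using y wnn[of y] by (auto simp: dist_real_def)
        then have "cdist (a,0) (?p y) < \<epsilon>" using ep wnn[of y] unfolding cdist_def by auto
        moreover have "(a,0) \<in> cM a" by (simp add: cM_def)
        ultimately show ?thesis using inM[of y] False by simp
      qed
      ultimately show ?thesis by blast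
    qed
  qed
qed

locale YC =
  fixes n :: nat and R :: "'a::metric_space set" and b1 b2 :: 'a
  assumes n2: "n > 2" and dG: "de_Groot_continuum R"
    and b1R: "b1 \<in> R" and b2R: "b2 \<in> R" and b12: "b1 \<noteq> b2"
begin

abbreviation "S \<equiv> {0..<int n} \<times> R"
abbreviation "rh \<equiv> rho n R b1 b2"
definition e :: "int \<Rightarrow> 'a \<Rightarrow> (int \<times> 'a) set" where "e k x = rh `` {(k,x)}"
abbreviation "Y \<equiv> Y_space n R b1 b2"
abbreviation "ZR \<equiv> ZR_space n R"

lemma rh_sub: "rh \<subseteq> S \<times> S" unfolding rho_def by auto

lemma equiv_rh: "equiv S rh"
proof (rule equivI)
  show "rh \<subseteq> S \<times> S" by (rule rh_sub)
  show "refl_on S rh" unfolding refl_on_def rho_def by auto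
  show "sym rh" unfolding sym_def rho_def by auto
  show "trans rh"
  proof (rule transI)
    fix p q r assume "(p,q) \<in> rh" "(q,r) \<in> rh"
    then show "(p,r) \<in> rh" unfolding rho_def using b12 n2
      by (auto dest: mod_succ_inj)
  qed
qed

lemma mem_rh: "(p,q) \<in> rh \<longleftrightarrow> p \<in> S \<and> q \<in> S \<and>
   (p = q \<or> (\<exists>k. p = (k, b2) \<and> q = ((k + 1) mod int n, b1)) \<or>
        (\<exists>k. q = (k, b2) \<and> p = ((k + 1) mod int n, b1)))"
  unfolding rho_def by auto

lemma e_eq:
  assumes "j \<in> {0..<int n}" "i \<in> {0..<int n}" "x \<in> R" "y \<in> R"
  shows "e j x = e i y \<longleftrightarrow> (j = i \<and> x = y) \<or> (x = b2 \<and> y = b1 \<and> i = (j+1) mod int n)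
          \<or> (x = b1 \<and> y = b2 \<and> j = (i+1) mod int n)"
  unfolding e_def using eq_equiv_class_iff[OF equiv_rh, of "(j,x)" "(i,y)"] assms
  by (auto simp: mem_rh)

lemma topspace_ZR[simp]: "topspace ZR = S"
  by (simp add: ZR_space_def)

lemma cls_mem: "p \<in> S \<Longrightarrow> p \<in> rh``{p}"
  by (simp add: mem_rh)

lemma cls_sub: "c \<in> S//rh \<Longrightarrow> p \<in> c \<Longrightarrow> p \<in> S"
  using Union_quotient[OF equiv_rh] by blast

lemma cls_in: "p \<in> S \<Longrightarrow> rh``{p} \<in> S//rh"
  by (rule quotientI)

lemma Union_cls: assumes "U \<subseteq> S//rh" "p \<in> S"
  shows "rh``{p} \<in> U \<longleftrightarrow> p \<in> \<Union>U"
proof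
  assume "rh``{p} \<in> U" then show "p \<in> \<Union>U" using cls_mem[OF assms(2)] by blast
next
  assume "p \<in> \<Union>U"
  then obtain c where c: "c \<in> U" "p \<in> c" by blast
  then have "c \<in> S//rh" using assms by auto
  then obtain p' where p': "p' \<in> S" "c = rh``{p'}" unfolding quotient_def by blast
  then have "(p',p) \<in> rh" using c by auto
  then have "rh``{p} = rh``{p'}" using equiv_rh p' assms
    by (metis equiv_class_eq)
  then show "rh``{p} \<in> U" using c p' by simp
qed

lemma istop: "istopology (\<lambda>U. U \<subseteq> S//rh \<and> openin ZR (\<Union>U))"
proof -
  have 1: "U \<inter> V \<subseteq> S // rh \<and> openin ZR (\<Union> (U \<inter> V))"
    if U: "U \<subseteq> S // rh \<and> openin ZR (\<Union> U)" and V: "V \<subseteq> S // rh \<and> openin ZR (\<Union> V)" for U V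
  proof -
    have "\<Union>U \<subseteq> S" using U Union_quotient[OF equiv_rh] by blast
    have "\<Union>U \<inter> \<Union>V \<subseteq> \<Union>(U \<inter> V)"
    proof
      fix p assume p: "p \<in> \<Union>U \<inter> \<Union>V"
      then have pS: "p \<in> S" using \<open>\<Union>U \<subseteq> S\<close> by blast
      then show "p \<in> \<Union>(U \<inter> V)" using p Union_cls[OF _ pS, of U] Union_cls[OF _ pS, of V] U V cls_mem[OF pS]
        by blast
    qed
    then have "\<Union>(U \<inter> V) = \<Union>U \<inter> \<Union>V" by blast
    then show ?thesis using U V by auto
  qed
  have 2: "\<Union>K \<subseteq> S // rh \<and> openin ZR (\<Union> (\<Union>K))"
    if K: "\<forall>U\<in>K. U \<subseteq> S // rh \<and> openin ZR (\<Union> U)" for K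
  proof -
    have "\<Union>(\<Union>K) = \<Union>(Union ` K)" by blast
    then show ?thesis using K by auto
  qed
  show ?thesis unfolding istopology_def using 1 2 by meson
qed

lemma openin_Y: "openin Y U \<longleftrightarrow> U \<subseteq> S//rh \<and> openin ZR (\<Union>U)"
  unfolding Y_space_def quotient_topology_def using istop by simp

lemma topspace_Y[simp]: "topspace Y = S//rh"
proof -
  have "openin Y (S//rh)" unfolding openin_Y using Union_quotient[OF equiv_rh]
    by (metis openin_topspace order_refl topspace_ZR)
  then show ?thesis using openin_Y openin_subset by (metis openin_topspace subset_antisym)
qed

lemma cont_q: "continuous_map ZR Y (\<lambda>p. rh``{p})"
  unfolding continuous_map_def
proof (intro conjI allI impI)
  show "(\<lambda>p. rh `` {p}) \<in> topspace ZR \<rightarrow> topspace Y" by (auto intro: quotientI)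
  fix U assume "openin Y U"
  then have U: "U \<subseteq> S//rh" "openin ZR (\<Union>U)" by (auto simp: openin_Y)
  have "{x \<in> topspace ZR. rh `` {x} \<in> U} = \<Union>U"
  proof
    show "{x \<in> topspace ZR. rh `` {x} \<in> U} \<subseteq> \<Union>U" using Union_cls[OF U(1)] by auto
    show "\<Union>U \<subseteq> {x \<in> topspace ZR. rh `` {x} \<in> U}"
    proof
      fix p assume p: "p \<in> \<Union>U"
      then have "p \<in> S" using U(1) cls_sub by blast
      then show "p \<in> {x \<in> topspace ZR. rh `` {x} \<in> U}" using Union_cls[OF U(1)] p by auto
    qed
  qed
  then show "openin ZR {x \<in> topspace ZR. rh `` {x} \<in> U}" using U by simp
qed

lemma cont_from_Y:
  assumes "continuous_map ZR T (\<lambda>p. g (rh``{p}))"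
  shows "continuous_map Y T g"
  unfolding continuous_map_def
proof (intro conjI allI impI)
  show "g \<in> topspace Y \<rightarrow> topspace T" using assms
    by (auto simp: continuous_map_def elim!: quotientE)
  fix V assume V: "openin T V"
  let ?U = "{x \<in> topspace Y. g x \<in> V}"
  have "\<Union>?U = {p \<in> topspace ZR. g (rh``{p}) \<in> V}"
  proof
    show "\<Union>?U \<subseteq> {p \<in> topspace ZR. g (rh``{p}) \<in> V}"
    proof
      fix p assume p: "p \<in> \<Union>?U"
      then obtain c where c: "c \<in> ?U" "p \<in> c" by blast
      then have "c \<in> S//rh" by auto
      from cls_sub[OF this c(2)] have pS: "p \<in> S" .
      have "?U \<subseteq> S//rh" by auto
      from Union_cls[OF this pS] p pS show "p \<in> {p \<in> topspace ZR. g (rh``{p}) \<in> V}" by auto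
    qed
    show "{p \<in> topspace ZR. g (rh``{p}) \<in> V} \<subseteq> \<Union>?U"
    proof
      fix p assume p: "p \<in> {p \<in> topspace ZR. g (rh``{p}) \<in> V}"
      then have pS: "p \<in> S" by auto
      have "?U \<subseteq> S//rh" by auto
      from Union_cls[OF this pS] p pS cls_in[OF pS] show "p \<in> \<Union>?U" by auto
    qed
  qed
  then show "openin Y ?U" using assms V unfolding openin_Y continuous_map_def by auto
qed

lemma cont_ZR:
  assumes "\<And>k. k \<in> {0..<int n} \<Longrightarrow> continuous_map (top_of_set R) T (\<lambda>x. F (k,x))"
  shows "continuous_map ZR T F"
  unfolding continuous_map_def
proof (intro conjI allI impI)
  show "F \<in> topspace ZR \<rightarrow> topspace T" using assms by (fastforce simp: continuous_map_def Pi_iff)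
  fix V assume V: "openin T V"
  have "{p \<in> topspace ZR. F p \<in> V} = (\<Union>k\<in>{0..<int n}. {k} \<times> {x \<in> R. F (k,x) \<in> V})" by auto
  moreover have "openin ZR ({k} \<times> {x \<in> R. F (k,x) \<in> V})" if "k \<in> {0..<int n}" for k
  proof -
    have "openin (top_of_set R) {x \<in> R. F (k,x) \<in> V}"
      using assms[OF that] V unfolding continuous_map_def by auto
    then show ?thesis unfolding ZR_space_def using that by (simp add: openin_prod_Times_iff)
  qed
  ultimately show "openin ZR {p \<in> topspace ZR. F p \<in> V}" by auto
qed

lemma R_props: "compact R" "connected R"
  and rigid: "\<And>f. continuous_on R f \<Longrightarrow> f ` R \<subseteq> R \<Longrightarrow> (\<forall>x\<in>R. f x = x) \<or> (\<exists>c. \<forall>x\<in>R. f x = c)"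
  using dG unfolding de_Groot_continuum_def by auto

lemma R_cs: "compact_space (top_of_set R)"
  using R_props by (simp add: compact_space_subtopology)

lemma R_conn: "connected_space (top_of_set R)"
  using R_props by (simp add: connected_space_subtopology)

lemma R_infinite: "infinite R"
  using connected_finite_iff_sing[OF R_props(2)] b1R b2R b12 by auto

lemma R_interior: "\<exists>x\<in>R. x \<noteq> b1 \<and> x \<noteq> b2"
proof -
  have "infinite (R - {b1,b2})" using R_infinite by auto
  then obtain x where "x \<in> R - {b1,b2}" by (metis ex_in_conv finite.emptyI)
  then show ?thesis by auto
qed

lemma rigid_map: assumes "continuous_map (top_of_set R) (top_of_set R) g" "x \<in> R" "y \<in> R" "g x \<noteq> g y"
  shows "\<forall>z\<in>R. g z = z"
proof -
  have "continuous_on R g" "g ` R \<subseteq> R" using assms(1) by auto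
  then show ?thesis using rigid[of g] assms by metis
qed

lemma S_quot: "S//rh = (\<lambda>p. rh``{p}) ` S"
  unfolding quotient_def by auto

lemma cs_Y: "compact_space Y"
proof -
  have "compact_space ZR" unfolding ZR_space_def
    using R_cs by (simp add: compact_space_prod_topology compact_space_discrete_topology)
  then have "compactin Y ((\<lambda>p. rh``{p}) ` topspace ZR)"
    using image_compactin cont_q compact_space_def by blast
  then show ?thesis unfolding compact_space_def by (simp add: S_quot)
qed

abbreviation "rng \<equiv> {0..<int n}"

lemma e_in: "k \<in> rng \<Longrightarrow> x \<in> R \<Longrightarrow> e k x \<in> topspace Y"
  unfolding e_def by (auto intro: quotientI)

lemma quot_e: "c \<in> topspace Y \<longleftrightarrow> (\<exists>k\<in>rng. \<exists>x\<in>R. c = e k x)"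
  unfolding topspace_Y S_quot e_def by auto

lemma cont_e: "k \<in> rng \<Longrightarrow> continuous_map (top_of_set R) Y (e k)"
proof -
  assume k: "k \<in> rng"
  have "continuous_map (top_of_set R) ZR (\<lambda>x. (k,x))"
    unfolding ZR_space_def continuous_map_pairwise o_def using k by auto
  then have "continuous_map (top_of_set R) Y ((\<lambda>p. rh``{p}) \<circ> (\<lambda>x. (k,x)))"
    using cont_q continuous_map_compose by blast
  moreover have "e k = (\<lambda>x. rh``{(k,x)})" by (simp add: fun_eq_iff e_def)
  ultimately show ?thesis by (simp add: o_def)
qed

lemma e_inj: "k \<in> rng \<Longrightarrow> x \<in> R \<Longrightarrow> y \<in> R \<Longrightarrow> e k x = e k y \<longleftrightarrow> x = y"
  using e_eq[of k k x y] n2 by (auto simp: mod_succ split: if_splits)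

lemma e_b1: "k \<in> rng \<Longrightarrow> e k b1 = e ((k-1) mod int n) b2"
proof -
  assume k: "k \<in> rng"
  have "((k-1) mod int n + 1) mod int n = k" using k by (simp add: mod_add_left_eq)
  then show ?thesis using e_eq[of "(k-1) mod int n" k b2 b1] k b1R b2R n2 by auto
qed

lemma e_b1': "k \<in> rng \<Longrightarrow> e ((k+1) mod int n) b1 = e k b2"
proof -
  assume k: "k \<in> rng"
  then show ?thesis using e_eq[of k "(k+1) mod int n" b2 b1] k b1R b2R n2 by auto
qed

definition C where "C k = e k ` R"

lemma conn_C: "k \<in> rng \<Longrightarrow> connectedin Y (C k)"
  unfolding C_def using connectedin_continuous_map_image[OF cont_e] R_conn
  by (metis connectedin_topspace topspace_euclidean_subtopology)

lemma conn_upto: "m < n \<Longrightarrow> connectedin Y (\<Union>k\<in>{0..int m}. C k)"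
proof (induction m)
  case 0 then show ?case using conn_C by simp
next
  case (Suc m)
  have eq: "{0..int (Suc m)} = insert (int (Suc m)) {0..int m}" by auto
  have m: "int m \<in> rng" "(int m + 1) mod int n = int (Suc m)" using Suc by auto
  have "e (int m) b2 \<in> C (int m)" "e (int m) b2 = e (int (Suc m)) b1"
    using b2R e_b1'[OF m(1)] m(2) unfolding C_def by auto
  moreover have "e (int m) b2 \<in> (\<Union>k\<in>{0..int m}. C k)"
    using b2R unfolding C_def by (intro UN_I[of "int m"]) auto
  moreover have "e (int (Suc m)) b1 \<in> C (int (Suc m))" using b1R unfolding C_def by blast
  ultimately have "e (int m) b2 \<in> C (int (Suc m)) \<inter> (\<Union>k\<in>{0..int m}. C k)"
    by simp
  then show ?case using Suc eq connectedin_Un[OF conn_C[of "int (Suc m)"] Suc.IH] by auto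
qed

lemma Union_C: "(\<Union>k\<in>rng. C k) = topspace Y"
proof
  show "(\<Union>k\<in>rng. C k) \<subseteq> topspace Y" unfolding C_def using quot_e by blast
  show "topspace Y \<subseteq> (\<Union>k\<in>rng. C k)"
  proof
    fix c assume "c \<in> topspace Y"
    then obtain k x where "k \<in> rng" "x \<in> R" "c = e k x" using quot_e by blast
    then show "c \<in> (\<Union>k\<in>rng. C k)" unfolding C_def by blast
  qed
qed

lemma conn_Y: "connected_space Y"
proof -
  have "{0..int (n-1)} = rng" using n2 by auto
  then have "connectedin Y (\<Union>k\<in>rng. C k)" using conn_upto[of "n-1"] n2 by auto
  then show ?thesis by (metis Union_C connectedin_topspace)
qed

definition wf :: "'a \<Rightarrow> real" where "wf x = min (dist x b1) (dist x b2)"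
definition uf :: "'a \<Rightarrow> real" where "uf x = dist x b1 / (dist x b1 + dist x b2)"
definition psi where "psi x = (if 0 < wf x then (x, wf x) else (b1, 0))"
abbreviation "CT \<equiv> Metric_space.mtopology (cM b1) cdist"
definition rp :: "int \<Rightarrow> int \<times> 'a \<Rightarrow> real" where
  "rp j p = (if fst p = j then uf (snd p) else if fst p = (j+1) mod int n then 1 - uf (snd p) else 0)"
definition Phi0 where
  "Phi0 p = (\<lambda>j\<in>rng. (if fst p = j then psi (snd p) else (b1,0), rp j p))"
abbreviation "TT \<equiv> product_topology (\<lambda>j. prod_topology CT euclideanreal) rng"
definition Phi where "Phi c = Phi0 (SOME p. p \<in> c)"

lemma wf_pos: "0 < wf x \<longleftrightarrow> x \<noteq> b1 \<and> x \<noteq> b2"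
  unfolding wf_def by auto

lemma uf_b: "uf b1 = 0" "uf b2 = 1"
  unfolding uf_def using b12 by (auto simp: dist_commute)

lemma psi_b: "psi b1 = (b1,0)" "psi b2 = (b1,0)"
  unfolding psi_def using wf_pos by auto

lemma Phi0_resp_step:
  assumes k: "k \<in> rng" shows "Phi0 (k, b2) = Phi0 ((k+1) mod int n, b1)"
proof -
  have "rp j (k, b2) = rp j ((k+1) mod int n, b1)" if j: "j \<in> rng" for j
  proof -
    have "((k+1) mod int n = (j+1) mod int n) = (k = j)" using mod_succ_inj[of k "int n" j] k j by auto
    moreover have "k = j \<Longrightarrow> (k+1) mod int n \<noteq> j" using j n2 by (auto simp: mod_succ)
    ultimately show ?thesis unfolding rp_def using uf_b by auto
  qed
  then show ?thesis unfolding Phi0_def using psi_b by (auto simp: fun_eq_iff)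
qed

lemma Phi0_resp: assumes "(p,q) \<in> rh" shows "Phi0 p = Phi0 q"
  using assms Phi0_resp_step unfolding mem_rh by auto

lemma Phi0_e: assumes "k \<in> rng" "j \<in> rng" "x \<in> R" "y \<in> R" "e k x = e j y"
  shows "Phi0 (k,x) = Phi0 (j,y)"
  using assms eq_equiv_class_iff[OF equiv_rh, of "(k,x)" "(j,y)"] Phi0_resp unfolding e_def by auto

lemma Phi_cls: assumes "p \<in> S" shows "Phi (rh``{p}) = Phi0 p"
proof -
  have "(SOME q. q \<in> rh``{p}) \<in> rh``{p}" using cls_mem[OF assms] by (rule someI)
  then show ?thesis unfolding Phi_def using Phi0_resp by auto
qed

lemma vert: assumes "k \<in> rng" "x \<in> R" "x = b1 \<or> x = b2"
  shows "\<exists>k'\<in>rng. e k x = e k' b2"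
proof (cases "x = b2")
  case True then show ?thesis using assms by blast
next
  case False
  then have "x = b1" using assms by auto
  then show ?thesis using e_b1[OF assms(1)] n2 by (intro bexI[of _ "(k-1) mod int n"]) auto
qed

lemma Phi0_app: "j \<in> rng \<Longrightarrow> Phi0 (k,x) j = (if k = j then psi x else (b1,0), rp j (k,x))"
  by (simp add: Phi0_def)

lemma Phi0_inj: assumes "k \<in> rng" "j \<in> rng" "x \<in> R" "y \<in> R" "Phi0 (k,x) = Phi0 (j,y)"
  shows "e k x = e j y"
proof (cases "x \<noteq> b1 \<and> x \<noteq> b2")
  case True
  then have wx: "0 < wf x" by (simp add: wf_pos)
  have "Phi0 (k,x) k = Phi0 (j,y) k" using assms by simp
  then have "psi x = (if j = k then psi y else (b1,0))" using assms(1) unfolding Phi0_def by simp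
  then have "j = k \<and> x = y" using wx unfolding psi_def by (auto split: if_splits)
  then show ?thesis by simp
next
  case F1: False
  show ?thesis
  proof (cases "y \<noteq> b1 \<and> y \<noteq> b2")
    case True
    then have wy: "0 < wf y" by (simp add: wf_pos)
    have "Phi0 (k,x) j = Phi0 (j,y) j" using assms by simp
    then have "(if k = j then psi x else (b1,0)) = psi y" using assms(2) Phi0_app by simp
    then have "j = k \<and> x = y" using wy unfolding psi_def by (auto split: if_splits)
    then show ?thesis by simp
  next
    case False
    obtain k' where k': "k' \<in> rng" "e k x = e k' b2" using vert[of k x] F1 assms by auto
    obtain j' where j': "j' \<in> rng" "e j y = e j' b2" using vert[of j y] False assms by auto
    have "Phi0 (k',b2) = Phi0 (j',b2)"
      using Phi0_e[OF assms(1) k'(1) assms(3) b2R k'(2)] Phi0_e[OF assms(2) j'(1) assms(4) b2R j'(2)] assms(5)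
      by simp
    then have "rp k' (k',b2) = rp k' (j',b2)" using k'(1) unfolding Phi0_def by (auto simp: fun_eq_iff dest: spec[of _ k'])
    then have "j' = k'" unfolding rp_def using uf_b by (auto split: if_splits)
    then show ?thesis using k' j' by simp
  qed
qed

lemma cont_Phi0: "continuous_map ZR TT Phi0"
proof (rule cont_ZR)
  fix k assume k: "k \<in> rng"
  have wc: "continuous_on UNIV wf" unfolding wf_def by (intro continuous_intros)
  have ucont: "continuous_on R uf"
  proof -
    have "dist x b1 + dist x b2 \<noteq> 0" for x
      using b12 by (metis add_nonneg_eq_0_iff dist_eq_0_iff zero_le_dist)
    then show ?thesis unfolding uf_def by (intro continuous_intros) auto
  qed
  have psic: "continuous_map (top_of_set R) CT psi"
  proof -
    have "psi = (\<lambda>x. if 0 < wf x then (x, wf x) else (b1,0))" by (simp add: fun_eq_iff psi_def)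
    then show ?thesis using cone_cont[OF wc, of R b1] wf_def by simp
  qed
  interpret M: Metric_space "cM b1" cdist by (rule cone_metric)
  have b10: "(b1,0) \<in> topspace CT" using M.topspace_mtopology by (simp add: cM_def)
  show "continuous_map (top_of_set R) TT (\<lambda>x. Phi0 (k, x))"
    unfolding continuous_map_componentwise
  proof (intro conjI ballI)
    show "(\<lambda>x. Phi0 (k, x)) ` topspace (top_of_set R) \<subseteq> extensional rng"
      unfolding Phi0_def by auto
    fix j assume j: "j \<in> rng"
    have c1: "continuous_map (top_of_set R) CT (\<lambda>x. if k = j then psi x else (b1,0))"
      using psic b10 by auto
    have c2: "continuous_on R (\<lambda>x. rp j (k,x))"
      unfolding rp_def fst_conv snd_conv using ucont
      by (cases "k = j"; cases "k = (j+1) mod int n") (auto intro: continuous_intros)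
    show "continuous_map (top_of_set R) (prod_topology CT euclideanreal) (\<lambda>x. Phi0 (k, x) j)"
      unfolding continuous_map_pairwise o_def Phi0_app[OF j] using c1 c2 by simp
  qed
qed

lemma cont_Phi: "continuous_map Y TT Phi"
proof (rule cont_from_Y)
  show "continuous_map ZR TT (\<lambda>p. Phi (rh `` {p}))"
  proof (rule continuous_map_eq[OF cont_Phi0])
    fix p assume "p \<in> topspace ZR"
    then have "p \<in> S" by simp
    then show "Phi0 p = Phi (rh `` {p})" by (rule Phi_cls[symmetric])
  qed
qed

lemma met_TT: "metrizable_space TT"
proof -
  interpret M: Metric_space "cM b1" cdist by (rule cone_metric)
  have "metrizable_space (prod_topology CT euclideanreal)"
    using M.metrizable_space_mtopology metrizable_space_euclidean[where 'a=real]
    by (simp add: metrizable_space_prod_topology)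
  then show ?thesis by (simp add: metrizable_space_product_topology)
qed

lemma inj_Phi: "inj_on Phi (topspace Y)"
proof
  fix c c' assume c: "c \<in> topspace Y" and c': "c' \<in> topspace Y" and eq: "Phi c = Phi c'"
  obtain k x where kx: "k \<in> rng" "x \<in> R" "c = e k x" using c quot_e by blast
  obtain j y where jy: "j \<in> rng" "y \<in> R" "c' = e j y" using c' quot_e by blast
  have "(k,x) \<in> S" "(j,y) \<in> S" using kx jy by auto
  then have "Phi c = Phi0 (k,x)" "Phi c' = Phi0 (j,y)"
    using Phi_cls kx(3) jy(3) unfolding e_def by presburger+
  then have "Phi0 (k,x) = Phi0 (j,y)" using eq by simp
  then have "e k x = e j y" by (rule Phi0_inj[OF kx(1) jy(1) kx(2) jy(2)])
  then show "c = c'" using kx(3) jy(3) by simp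
qed

lemma met_Y: "metrizable_space Y" and haus_Y: "Hausdorff_space Y"
proof -
  have "embedding_map Y TT Phi"
    using continuous_imp_embedding_map[OF cont_Phi cs_Y metrizable_imp_Hausdorff_space[OF met_TT] inj_Phi] .
  then have h: "Y homeomorphic_space subtopology TT (Phi ` topspace Y)"
    by (rule embedding_map_imp_homeomorphic_space)
  have "metrizable_space (subtopology TT (Phi ` topspace Y))"
    using met_TT by (rule metrizable_space_subtopology)
  then show "metrizable_space Y" using h homeomorphic_metrizable_space by blast
  then show "Hausdorff_space Y" by (rule metrizable_imp_Hausdorff_space)
qed

lemma continuum: "continuum_space Y"
  unfolding continuum_space_def using e_in[of 0 b1] n2 b1R cs_Y conn_Y met_Y by auto

lemma compact_C: "k \<in> rng \<Longrightarrow> compactin Y (C k)"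
  unfolding C_def using image_compactin[OF _ cont_e] R_cs compact_space_def
  by (metis topspace_euclidean_subtopology)

lemma closed_C: "k \<in> rng \<Longrightarrow> closedin Y (C k)"
  using compact_C haus_Y compactin_imp_closedin by blast

lemma closed_UC: "J \<subseteq> rng \<Longrightarrow> closedin Y (\<Union>i\<in>J. C i)"
  by (intro closedin_Union) (auto intro: closed_C finite_subset)

lemma C_sub: "k \<in> rng \<Longrightarrow> C k \<subseteq> topspace Y"
  unfolding C_def using e_in by auto

lemma paste:
  assumes A: "closedin Y A" and B: "closedin Y B" and K: "K \<subseteq> A \<union> B" "K \<subseteq> topspace Y"
    and ov: "\<And>c. c \<in> K \<Longrightarrow> c \<in> A \<Longrightarrow> c \<in> B \<Longrightarrow> c = a0" and a0: "a0 \<in> topspace Y"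
  shows "continuous_map (subtopology Y K) Y (\<lambda>c. if c \<in> A then c else a0)"
  unfolding continuous_map_closedin
proof (intro conjI allI impI)
  have tK: "topspace (subtopology Y K) = K" using K by auto
  show "(\<lambda>c. if c \<in> A then c else a0) \<in> topspace (subtopology Y K) \<rightarrow> topspace Y"
    using tK K a0 by auto
  fix F assume F: "closedin Y F"
  have eq: "{x \<in> topspace (subtopology Y K). (if x \<in> A then x else a0) \<in> F}
      = K \<inter> (A \<inter> F \<union> (if a0 \<in> F then B else {}))"
    using tK K ov by auto
  have "closedin Y (A \<inter> F \<union> (if a0 \<in> F then B else {}))" using A B F by auto
  then show "closedin (subtopology Y K) {x \<in> topspace (subtopology Y K). (if x \<in> A then x else a0) \<in> F}"
    unfolding eq by (rule closedin_subtopology_Int_closed)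
qed

definition ginv where "ginv j = inv_into R (e j)"

lemma ginv: "j \<in> rng \<Longrightarrow> x \<in> R \<Longrightarrow> ginv j (e j x) = x"
  unfolding ginv_def using e_inj by (simp add: inj_on_def inv_into_f_f)

lemma ginv_cont: "j \<in> rng \<Longrightarrow> continuous_map (subtopology Y (C j)) (top_of_set R) (ginv j)"
  unfolding C_def by (rule continuous_inverse_map[OF R_cs haus_Y cont_e]) (auto simp: ginv)

lemma collapse:
  assumes f: "continuous_map (top_of_set R) Y f" and j: "j \<in> rng"
    and phi: "continuous_map (subtopology Y (f`R)) Y \<phi>" and phiC: "\<phi> ` f ` R \<subseteq> C j"
    and ab: "a \<in> R" "b \<in> R" "\<phi> (f a) \<noteq> \<phi> (f b)"
  shows "\<forall>t\<in>R. \<phi> (f t) = e j t"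
proof -
  have f1: "continuous_map (top_of_set R) (subtopology Y (f`R)) f"
    using f by (intro continuous_map_into_subtopology) (auto simp: Pi_iff)
  have f2: "continuous_map (top_of_set R) Y (\<phi> \<circ> f)"
    using continuous_map_compose[OF f1 phi] .
  have f3: "continuous_map (top_of_set R) (subtopology Y (C j)) (\<phi> \<circ> f)"
    using f2 phiC by (intro continuous_map_into_subtopology) (auto simp: Pi_iff)
  have G: "continuous_map (top_of_set R) (top_of_set R) (ginv j \<circ> \<phi> \<circ> f)"
    using continuous_map_compose[OF f3 ginv_cont[OF j]] by (simp add: o_assoc)
  have bk: "e j (ginv j c) = c" if "c \<in> C j" for c
    using that ginv[OF j] unfolding C_def by auto
  have "\<phi> (f a) \<in> C j" "\<phi> (f b) \<in> C j" using phiC ab by auto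
  then have "ginv j (\<phi> (f a)) \<noteq> ginv j (\<phi> (f b))" using bk ab(3) by metis
  then have "(ginv j \<circ> \<phi> \<circ> f) a \<noteq> (ginv j \<circ> \<phi> \<circ> f) b" by simp
  then have id: "\<forall>z\<in>R. (ginv j \<circ> \<phi> \<circ> f) z = z" using rigid_map[OF G ab(1,2)] by blast
  show ?thesis
  proof
    fix t assume t: "t \<in> R"
    have "\<phi> (f t) \<in> C j" using phiC t by auto
    then have "\<phi> (f t) = e j (ginv j (\<phi> (f t)))" using bk by simp
    also have "... = e j t" using id t by simp
    finally show "\<phi> (f t) = e j t" .
  qed
qed

definition "Dj j = (\<Union>i\<in>rng - {j}. C i)"
definition "D2 j = (\<Union>i\<in>rng - {j, (j+1) mod int n}. C i)"
definition "Ij j = e j ` (R - {b1,b2})"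

lemma succ_rng: "j \<in> rng \<Longrightarrow> (j+1) mod int n \<in> rng"
  using n2 by auto

lemma succ_ne: "j \<in> rng \<Longrightarrow> (j+1) mod int n \<noteq> j"
  using n2 by (auto simp: mod_succ)

lemma succ2_ne: "j \<in> rng \<Longrightarrow> ((j+1) mod int n + 1) mod int n \<noteq> j"
  using n2 by (auto simp: mod_succ)

lemma G1: "j \<in> rng \<Longrightarrow> c \<in> C j \<Longrightarrow> c \<in> Dj j \<Longrightarrow> c = e j b1 \<or> c = e j b2"
  unfolding C_def Dj_def using e_eq by blast

lemma G2: "j \<in> rng \<Longrightarrow> c \<in> C j \<Longrightarrow> c \<in> D2 j \<Longrightarrow> c = e j b1"
  unfolding C_def D2_def using e_eq by blast

lemma G3: "j \<in> rng \<Longrightarrow> topspace Y \<subseteq> C j \<union> Dj j"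
  unfolding Dj_def using Union_C by blast

lemma G4: assumes j: "j \<in> rng" and K: "K \<subseteq> topspace Y" and E: "K \<inter> Ij ((j+1) mod int n) = {}"
  shows "K \<subseteq> C j \<union> D2 j"
proof
  fix c assume c: "c \<in> K"
  then obtain i x where ix: "i \<in> rng" "x \<in> R" "c = e i x" using K quot_e by blast
  show "c \<in> C j \<union> D2 j"
  proof (cases "i = j \<or> i \<noteq> (j+1) mod int n")
    case True
    then show ?thesis unfolding C_def D2_def using ix by blast
  next
    case False
    then have i: "i = (j+1) mod int n" by simp
    show ?thesis
    proof (cases "x = b1")
      case True
      then have "c = e j b2" using ix i e_b1'[OF j] by simp
      then show ?thesis unfolding C_def using b2R by blast
    next
      case F1: False
      show ?thesis
      proof (cases "x = b2")
        case True
        let ?i = "(i+1) mod int n"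
        have "c = e ?i b1" using ix True e_b1'[OF ix(1)] by simp
        moreover have "?i \<in> rng - {j, (j+1) mod int n}"
          using i succ2_ne[OF j] succ_ne[OF succ_rng[OF j]] succ_rng[OF ix(1)] by auto
        ultimately show ?thesis unfolding D2_def C_def using b1R by blast
      next
        case False
        then have "c \<in> Ij ((j+1) mod int n)" unfolding Ij_def using ix i F1 by auto
        then show ?thesis using E c by blast
      qed
    qed
  qed
qed

lemma G5: "j \<in> rng \<Longrightarrow> i \<in> rng \<Longrightarrow> i \<noteq> j \<Longrightarrow> Ij j \<inter> C i = {}"
  unfolding Ij_def C_def using e_eq by auto

lemma G7: "j \<in> rng \<Longrightarrow> p \<in> Ij j \<Longrightarrow> p \<noteq> e j b1 \<and> p \<noteq> e j b2"
  unfolding Ij_def using e_inj b1R b2R by auto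

lemma Ij_C: "Ij j \<subseteq> C j" unfolding Ij_def C_def by auto

lemma collapse_contra:
  assumes f: "continuous_map (top_of_set R) Y f" and j: "j \<in> rng"
    and B: "closedin Y B" and KB: "f`R \<subseteq> C j \<union> B"
    and ov: "\<And>c. c \<in> f`R \<Longrightarrow> c \<in> C j \<Longrightarrow> c \<in> B \<Longrightarrow> c = u'"
    and u': "u' \<in> f`R" "u' = e j b1 \<or> u' = e j b2"
    and p: "p \<in> f`R" "p \<in> Ij j" and y: "y \<in> f`R" "y \<notin> C j"
  shows False
proof -
  have Ksub: "f`R \<subseteq> topspace Y" using f by (auto simp: continuous_map_def)
  have u'C: "u' \<in> C j" using u' b1R b2R unfolding C_def by auto
  let ?phi = "\<lambda>c. if c \<in> C j then c else u'"
  have phi: "continuous_map (subtopology Y (f`R)) Y ?phi"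
    by (rule paste[OF closed_C[OF j] B KB Ksub ov]) (use u' Ksub in auto)
  have phiC: "?phi ` f ` R \<subseteq> C j" using u'C by auto
  obtain a where a: "a \<in> R" "p = f a" using p by auto
  obtain b where b: "b \<in> R" "y = f b" using y by auto
  obtain c where c: "c \<in> R" "u' = f c" using u' by auto
  have "?phi (f a) \<noteq> ?phi (f b)" using a b p y G7[OF j p(2)] u'(2) Ij_C by auto
  from collapse[OF f j phi phiC a(1) b(1) this]
  have eq: "\<forall>t\<in>R. ?phi (f t) = e j t" .
  have "e j b = e j c" using eq b c y u'C by (metis)
  then have "b = c" using e_inj[OF j b(1) c(1)] by simp
  then show False using b c y u'C by simp
qed

lemma closed_Dj: "j \<in> rng \<Longrightarrow> closedin Y (Dj j)"
  unfolding Dj_def by (rule closed_UC) auto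

lemma closed_D2: "j \<in> rng \<Longrightarrow> closedin Y (D2 j)"
  unfolding D2_def by (rule closed_UC) auto

lemma conn_img: "continuous_map (top_of_set R) Y f \<Longrightarrow> connectedin Y (f`R)"
  using connectedin_continuous_map_image R_conn connectedin_topspace
  by (metis topspace_euclidean_subtopology)

lemma big_vert:
  assumes f: "continuous_map (top_of_set R) Y f" and j: "j \<in> rng"
    and p: "p \<in> f`R" "p \<in> Ij j" and y: "y \<in> f`R" "y \<notin> C j"
    and uu: "{u, u'} = {e j b1, e j b2}"
  shows "u \<in> f`R"
proof (rule ccontr)
  assume u: "u \<notin> f`R"
  have uu': "(u = e j b1 \<and> u' = e j b2) \<or> (u = e j b2 \<and> u' = e j b1)"
    using uu by (simp add: doubleton_eq_iff)
  have Ksub: "f`R \<subseteq> topspace Y" using f by (auto simp: continuous_map_def)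
  have KB: "f`R \<subseteq> C j \<union> Dj j" using G3[OF j] Ksub by blast
  show False
  proof (cases "u' \<in> f`R")
    case True
    show False
    proof (rule collapse_contra[OF f j closed_Dj[OF j] KB _ True _ p y])
      fix c assume "c \<in> f`R" "c \<in> C j" "c \<in> Dj j"
      then show "c = u'" using G1[OF j] u uu' by blast
    next
      show "u' = e j b1 \<or> u' = e j b2" using uu' by blast
    qed
  next
    case False
    have "C j \<inter> Dj j \<inter> f`R = {}" using G1[OF j] u False uu' by blast
    moreover have "C j \<inter> f`R \<noteq> {}" using p Ij_C by auto
    moreover have "Dj j \<inter> f`R \<noteq> {}" using y KB by auto
    ultimately show False using conn_img[OF f] closed_C[OF j] closed_Dj[OF j] KB
      unfolding connectedin_closedin by blast
  qed
qed

lemma big_vert2: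
  assumes f: "continuous_map (top_of_set R) Y f" and j: "j \<in> rng"
    and p: "p \<in> f`R" "p \<in> Ij j" and y: "y \<in> f`R" "y \<notin> C j"
  shows "e j b1 \<in> f`R" "e j b2 \<in> f`R"
  using big_vert[OF f j p y, of "e j b1" "e j b2"] big_vert[OF f j p y, of "e j b2" "e j b1"] by auto

lemma big_next:
  assumes f: "continuous_map (top_of_set R) Y f" and j: "j \<in> rng"
    and p: "p \<in> f`R" "p \<in> Ij j" and y: "y \<in> f`R" "y \<notin> C j"
  shows "f`R \<inter> Ij ((j+1) mod int n) \<noteq> {}"
proof
  assume E: "f`R \<inter> Ij ((j+1) mod int n) = {}"
  have Ksub: "f`R \<subseteq> topspace Y" using f by (auto simp: continuous_map_def)
  have KB: "f`R \<subseteq> C j \<union> D2 j" using G4[OF j Ksub E] .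
  show False
  proof (rule collapse_contra[OF f j closed_D2[OF j] KB _ big_vert2(1)[OF f j p y] _ p y])
    fix c assume "c \<in> f`R" "c \<in> C j" "c \<in> D2 j"
    then show "c = e j b1" using G2[OF j] by blast
  qed simp
qed

definition big where "big K j \<longleftrightarrow> K \<inter> Ij j \<noteq> {} \<and> \<not> K \<subseteq> C j"

lemma big_step:
  assumes f: "continuous_map (top_of_set R) Y f" and j: "j \<in> rng" and b: "big (f`R) j"
  shows "big (f`R) ((j+1) mod int n)"
proof -
  obtain p where p: "p \<in> f`R" "p \<in> Ij j" using b unfolding big_def by auto
  obtain y where y: "y \<in> f`R" "y \<notin> C j" using b unfolding big_def by auto
  have "\<not> f`R \<subseteq> C ((j+1) mod int n)"
    using G5[OF j succ_rng[OF j] succ_ne[OF j]] p by auto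
  then show ?thesis using big_next[OF f j p y] unfolding big_def by auto
qed

lemma big_all:
  assumes f: "continuous_map (top_of_set R) Y f" and j: "j \<in> rng" and b: "big (f`R) j"
  shows "big (f`R) ((j + int m) mod int n)"
proof (induction m)
  case 0 then show ?case using b j by (simp add: mod_pos_pos_trivial)
next
  case (Suc m)
  have "(j + int m) mod int n \<in> rng" using n2 by auto
  from big_step[OF f this Suc.IH]
  have "big (f`R) (((j + int m) mod int n + 1) mod int n)" .
  moreover have "((j + int m) mod int n + 1) mod int n = (j + int m + 1) mod int n"
    by (rule mod_add_left_eq)
  moreover have "j + int m + 1 = j + int (Suc m)" by simp
  ultimately show ?case by simp
qed

lemma big_verts:
  assumes f: "continuous_map (top_of_set R) Y f" and j: "j \<in> rng" and b: "big (f`R) j"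
    and i: "i \<in> rng"
  shows "e i b2 \<in> f`R"
proof -
  have "(j + int (nat ((i - j) mod int n))) mod int n = i"
    using i n2 by (simp add: mod_add_right_eq)
  then have "big (f`R) i" using big_all[OF f j b, of "nat ((i - j) mod int n)"] by simp
  then obtain p y where "p \<in> f`R" "p \<in> Ij i" "y \<in> f`R" "y \<notin> C i" unfolding big_def by auto
  then show ?thesis using big_vert2[OF f i] by blast
qed

lemma main_K:
  assumes f: "continuous_map (top_of_set R) Y f" and inj: "inj_on f R"
  shows "(\<exists>j\<in>rng. \<forall>t\<in>R. f t = e j t) \<or> (\<forall>i\<in>rng. e i b2 \<in> f`R)"
proof -
  have Ksub: "f`R \<subseteq> topspace Y" using f by (auto simp: continuous_map_def)
  have "\<exists>j\<in>rng. f`R \<inter> Ij j \<noteq> {}"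
  proof (rule ccontr)
    assume "\<not> (\<exists>j\<in>rng. f`R \<inter> Ij j \<noteq> {})"
    then have E: "\<And>j. j \<in> rng \<Longrightarrow> f`R \<inter> Ij j = {}" by blast
    have "f`R \<subseteq> (\<lambda>i. e i b2) ` rng"
    proof
      fix c assume c: "c \<in> f`R"
      then obtain i x where ix: "i \<in> rng" "x \<in> R" "c = e i x" using Ksub quot_e by blast
      show "c \<in> (\<lambda>i. e i b2) ` rng"
      proof (cases "x = b1 \<or> x = b2")
        case True
        then obtain k' where "k' \<in> rng" "e i x = e k' b2" using vert[OF ix(1,2)] by blast
        then show ?thesis using ix by blast
      next
        case False
        then have "c \<in> Ij i" unfolding Ij_def using ix by auto
        then show ?thesis using E[OF ix(1)] c by blast
      qed
    qed
    then have "finite (f`R)" by (rule finite_subset) auto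
    then have "finite R" using inj finite_imageD by blast
    then show False using R_infinite by simp
  qed
  then obtain j where j: "j \<in> rng" and p: "f`R \<inter> Ij j \<noteq> {}" by blast
  show ?thesis
  proof (cases "f`R \<subseteq> C j")
    case True
    have phi: "continuous_map (subtopology Y (f`R)) Y (\<lambda>c. c)"
      by (rule continuous_map_from_subtopology) simp
    have "f b1 \<noteq> f b2" using inj b1R b2R b12 by (auto simp: inj_on_def)
    from collapse[OF f j phi _ b1R b2R] this True
    have "\<forall>t\<in>R. f t = e j t" by simp
    then show ?thesis using j by blast
  next
    case False
    then have "big (f`R) j" using p unfolding big_def by auto
    then show ?thesis using big_verts[OF f j] by blast
  qed
qed

lemma pred_iff: assumes "k \<in> rng" "k' \<in> rng" shows "(k'+1) mod int n = k \<longleftrightarrow> k' = (k-1) mod int n"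
proof
  assume "(k'+1) mod int n = k"
  then have "(k-1) mod int n = ((k'+1) mod int n - 1) mod int n" by simp
  also have "... = (k'+1-1) mod int n" by (rule mod_diff_left_eq)
  also have "... = k'" using assms by simp
  finally show "k' = (k-1) mod int n" by simp
next
  assume "k' = (k-1) mod int n"
  then show "(k'+1) mod int n = k" using assms by (simp add: mod_add_left_eq)
qed

lemma cls_explicit: assumes k: "k \<in> rng" and x: "x \<in> R"
  shows "e k x = {(k,x)} \<union> (if x = b2 then {((k+1) mod int n, b1)} else {})
                 \<union> (if x = b1 then {((k-1) mod int n, b2)} else {})" (is "_ = ?RHS")
proof (intro equalityI subsetI)
  have pm: "(k-1) mod int n \<in> rng" using n2 by auto
  fix q assume "q \<in> e k x"
  then have "((k,x),q) \<in> rh" unfolding e_def by simp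
  then have qS: "q \<in> S" and
    c: "q = (k,x) \<or> (x = b2 \<and> q = ((k+1) mod int n, b1)) \<or> (\<exists>k'. q = (k',b2) \<and> (k'+1) mod int n = k \<and> x = b1)"
    unfolding mem_rh by auto
  from c show "q \<in> ?RHS"
  proof (elim disjE exE conjE)
    fix k' assume q: "q = (k',b2)" and kk: "(k'+1) mod int n = k" and xb: "x = b1"
    have "k' \<in> rng" using qS q by auto
    then have "k' = (k-1) mod int n" using pred_iff[OF k] kk by blast
    then show "q \<in> ?RHS" using q xb by simp
  qed auto
next
  have pm: "(k-1) mod int n \<in> rng" using n2 by auto
  fix q assume "q \<in> ?RHS"
  then consider "q = (k,x)" | "x = b2" "q = ((k+1) mod int n, b1)" | "x = b1" "q = ((k-1) mod int n, b2)"
    by (auto split: if_splits)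
  then have "((k,x),q) \<in> rh"
  proof cases
    case 1 then show ?thesis using k x unfolding mem_rh by auto
  next
    case 2 then show ?thesis using k x b1R succ_rng[OF k] unfolding mem_rh by auto
  next
    case 3
    have "((k-1) mod int n + 1) mod int n = k" using pred_iff[OF k pm] by simp
    then show ?thesis using 3 k x b2R pm unfolding mem_rh by auto
  qed
  then show "q \<in> e k x" unfolding e_def by simp
qed

lemma shift_set: "{((m + k) mod int n, x) |k x. (k, x) \<in> c} = (\<lambda>(k,x). ((m+k) mod int n, x)) ` c"
  by auto

lemma Y_shift_e: assumes "k \<in> rng" "x \<in> R"
  shows "Y_shift n R b1 b2 m (e k x) = e ((m+k) mod int n) x"
proof -
  have mk: "(m+k) mod int n \<in> rng" using n2 by auto
  have 1: "(m + (k+1) mod int n) mod int n = ((m+k) mod int n + 1) mod int n"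
    by (metis add.assoc mod_add_left_eq mod_add_right_eq)
  have 2: "(m + (k-1) mod int n) mod int n = ((m+k) mod int n - 1) mod int n"
    by (metis add_diff_eq mod_add_right_eq mod_diff_left_eq)
  have "Y_shift n R b1 b2 m (e k x) = (\<lambda>(k,x). ((m+k) mod int n, x)) ` e k x"
    unfolding Y_shift_def using e_in[OF assms] shift_set by simp
  also have "... = e ((m+k) mod int n) x"
    unfolding cls_explicit[OF assms] cls_explicit[OF mk assms(2)] using 1 2 by auto
  finally show ?thesis .
qed

lemma Y_shift_ext: "Y_shift n R b1 b2 m \<in> extensional (topspace Y)"
  unfolding Y_shift_def by simp

lemma shift_in: "k \<in> rng \<Longrightarrow> (m+k) mod int n \<in> rng"
  using n2 by auto

lemma cont_shift: "continuous_map Y Y (Y_shift n R b1 b2 m)"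
proof (rule cont_from_Y)
  have "continuous_map ZR Y (\<lambda>p. e ((m + fst p) mod int n) (snd p))"
  proof (rule cont_ZR)
    fix k assume "k \<in> rng"
    then show "continuous_map (top_of_set R) Y (\<lambda>x. e ((m + fst (k, x)) mod int n) (snd (k, x)))"
      using cont_e[OF shift_in] by simp
  qed
  then show "continuous_map ZR Y (\<lambda>p. Y_shift n R b1 b2 m (rh `` {p}))"
  proof (rule continuous_map_eq)
    fix p assume "p \<in> topspace ZR"
    then obtain k x where "p = (k,x)" "k \<in> rng" "x \<in> R" by auto
    then show "e ((m + fst p) mod int n) (snd p) = Y_shift n R b1 b2 m (rh `` {p})"
      using Y_shift_e unfolding e_def by simp
  qed
qed

lemma homeo_rot:
  assumes h: "homeomorphic_map Y Y h" and k: "k \<in> rng"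
  shows "\<exists>j\<in>rng. \<forall>t\<in>R. h (e k t) = e j t"
proof -
  have hc: "continuous_map Y Y h" using h by (rule homeomorphic_imp_continuous_map)
  have hinj: "inj_on h (topspace Y)" using h by (rule homeomorphic_imp_injective_map)
  have fc: "continuous_map (top_of_set R) Y (\<lambda>t. h (e i t))" if "i \<in> rng" for i
    using continuous_map_compose[OF cont_e[OF that] hc] by (simp add: o_def)
  have finj: "inj_on (\<lambda>t. h (e i t)) R" if i: "i \<in> rng" for i
  proof
    fix s t assume st: "s \<in> R" "t \<in> R" "h (e i s) = h (e i t)"
    then have "e i s = e i t" using hinj e_in[OF i] by (meson inj_onD)
    then show "s = t" using e_inj[OF i st(1,2)] by simp
  qed
  let ?k' = "(k+1) mod int n"
  have k': "?k' \<in> rng" using succ_rng[OF k] .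
  have inter: "z = h (e k b2)" if z1: "z \<in> (\<lambda>t. h (e k t))`R" and z2: "z \<in> (\<lambda>t. h (e ?k' t))`R" for z
  proof -
    obtain s where s: "s \<in> R" "z = h (e k s)" using z1 by auto
    obtain s' where s': "s' \<in> R" "z = h (e ?k' s')" using z2 by auto
    have "e k s = e ?k' s'" using hinj e_in[OF k s(1)] e_in[OF k' s'(1)] s s' by (metis inj_onD)
    then have "(k = ?k' \<and> s = s') \<or> (s = b2 \<and> s' = b1 \<and> ?k' = (k+1) mod int n)
          \<or> (s = b1 \<and> s' = b2 \<and> k = (?k'+1) mod int n)"
      using e_eq[OF k k' s(1) s'(1)] by simp
    then have "s = b2" by (elim disjE) (use succ_ne[OF k] succ2_ne[OF k] in auto)
    then show ?thesis using s by simp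
  qed
  show ?thesis
  proof (cases "\<exists>j\<in>rng. \<forall>t\<in>R. h (e k t) = e j t")
    case True then show ?thesis .
  next
    case False
    then have allv: "\<forall>i\<in>rng. e i b2 \<in> (\<lambda>t. h (e k t))`R"
      using main_K[OF fc[OF k] finj[OF k]] by blast
    have "\<exists>z1 z2. z1 \<noteq> z2 \<and> z1 \<in> (\<lambda>t. h (e k t))`R \<and> z2 \<in> (\<lambda>t. h (e k t))`R
             \<and> z1 \<in> (\<lambda>t. h (e ?k' t))`R \<and> z2 \<in> (\<lambda>t. h (e ?k' t))`R"
    proof (cases "\<exists>j\<in>rng. \<forall>t\<in>R. h (e ?k' t) = e j t")
      case True
      then obtain j where j: "j \<in> rng" "\<forall>t\<in>R. h (e ?k' t) = e j t" by blast
      have jm: "(j-1) mod int n \<in> rng" using n2 by auto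
      have "h (e ?k' b2) = e j b2" "h (e ?k' b1) = e j b1" using j b1R b2R by auto
      then have "e j b2 \<in> (\<lambda>t. h (e ?k' t))`R" "e j b1 \<in> (\<lambda>t. h (e ?k' t))`R"
        using image_eqI[OF _ b2R, of "e j b2" "\<lambda>t. h (e ?k' t)"] image_eqI[OF _ b1R, of "e j b1" "\<lambda>t. h (e ?k' t)"]
        by auto
      moreover have "e j b2 \<in> (\<lambda>t. h (e k t))`R" using allv j by blast
      moreover have "e j b1 \<in> (\<lambda>t. h (e k t))`R" using allv jm e_b1[OF j(1)] by simp
      moreover have "e j b2 \<noteq> e j b1" using e_inj[OF j(1) b2R b1R] b12 by simp
      ultimately show ?thesis by blast
    next
      case False
      then have allv': "\<forall>i\<in>rng. e i b2 \<in> (\<lambda>t. h (e ?k' t))`R"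
        using main_K[OF fc[OF k'] finj[OF k']] by blast
      have r: "0 \<in> rng" "1 \<in> rng" using n2 by auto
      have "e 0 b2 \<noteq> e 1 b2" using e_eq[OF r b2R b2R] b12 by simp
      then show ?thesis by (intro exI[of _ "e 0 b2"] exI[of _ "e 1 b2"]) (use allv allv' r in auto)
    qed
    then obtain z1 z2 where "z1 \<noteq> z2" "z1 \<in> (\<lambda>t. h (e k t))`R" "z2 \<in> (\<lambda>t. h (e k t))`R"
      "z1 \<in> (\<lambda>t. h (e ?k' t))`R" "z2 \<in> (\<lambda>t. h (e ?k' t))`R" by blast
    then show ?thesis using inter[of z1] inter[of z2] by simp
  qed
qed

lemma homeo_shift:
  assumes hh: "h \<in> carrier (homeo_group Y)"
  shows "\<exists>m\<in>rng. h = Y_shift n R b1 b2 m"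
proof -
  have h: "homeomorphic_map Y Y h" and hext: "h \<in> extensional (topspace Y)"
    using hh unfolding homeo_group_def by auto
  define \<sigma> where "\<sigma> k = (SOME j. j \<in> rng \<and> (\<forall>t\<in>R. h (e k t) = e j t))" for k
  have sig: "\<sigma> k \<in> rng \<and> (\<forall>t\<in>R. h (e k t) = e (\<sigma> k) t)" if k: "k \<in> rng" for k
  proof -
    have "\<exists>j. j \<in> rng \<and> (\<forall>t\<in>R. h (e k t) = e j t)" using homeo_rot[OF h k] by blast
    then show ?thesis unfolding \<sigma>_def by (rule someI_ex)
  qed
  have rec: "\<sigma> ((k+1) mod int n) = (\<sigma> k + 1) mod int n" if k: "k \<in> rng" for k
  proof -
    have k': "(k+1) mod int n \<in> rng" using succ_rng[OF k] .
    have "e (\<sigma> k) b2 = h (e k b2)" using sig[OF k] b2R by simp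
    also have "... = h (e ((k+1) mod int n) b1)" using e_b1'[OF k] by simp
    also have "... = e (\<sigma> ((k+1) mod int n)) b1" using sig[OF k'] b1R by simp
    finally have "e (\<sigma> k) b2 = e (\<sigma> ((k+1) mod int n)) b1" .
    then show ?thesis using e_eq[of "\<sigma> k" "\<sigma> ((k+1) mod int n)" b2 b1] sig[OF k] sig[OF k'] b1R b2R b12
      by auto
  qed
  have cf: "m < n \<Longrightarrow> \<sigma> (int m) = (\<sigma> 0 + int m) mod int n" for m
  proof (induction m)
    case 0 then show ?case using sig[of 0] n2 by simp
  next
    case (Suc m)
    have m: "int m \<in> rng" using Suc by auto
    have "(int m + 1) mod int n = int (Suc m)" using Suc by simp
    then have "\<sigma> (int (Suc m)) = (\<sigma> (int m) + 1) mod int n" using rec[OF m] by simp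
    also have "... = ((\<sigma> 0 + int m) mod int n + 1) mod int n" using Suc by simp
    also have "... = (\<sigma> 0 + int m + 1) mod int n" by (rule mod_add_left_eq)
    finally have "\<sigma> (int (Suc m)) = (\<sigma> 0 + int m + 1) mod int n" .
    moreover have "\<sigma> 0 + int m + 1 = \<sigma> 0 + int (Suc m)" by simp
    ultimately show ?case by metis
  qed
  have cf': "\<sigma> k = (\<sigma> 0 + k) mod int n" if k: "k \<in> rng" for k
    using cf[of "nat k"] k by auto
  have m0: "\<sigma> 0 \<in> rng" using sig[of 0] n2 by simp
  have "h = Y_shift n R b1 b2 (\<sigma> 0)"
  proof
    fix c show "h c = Y_shift n R b1 b2 (\<sigma> 0) c"
    proof (cases "c \<in> topspace Y")
      case True
      then obtain k x where kx: "k \<in> rng" "x \<in> R" "c = e k x" using quot_e by blast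
      then show ?thesis using sig[OF kx(1)] cf'[OF kx(1)] Y_shift_e[OF kx(1,2)] by simp
    next
      case False
      then show ?thesis using hext Y_shift_ext[of "\<sigma> 0"] unfolding extensional_def by simp
    qed
  qed
  then show ?thesis using m0 by blast
qed

lemma shift_shift: assumes "k \<in> rng" "x \<in> R"
  shows "Y_shift n R b1 b2 a (Y_shift n R b1 b2 b (e k x)) = e ((a+b+k) mod int n) x"
proof -
  have "Y_shift n R b1 b2 a (Y_shift n R b1 b2 b (e k x)) = e ((a + (b+k) mod int n) mod int n) x"
    using Y_shift_e[OF assms] Y_shift_e[OF shift_in[OF assms(1)] assms(2)] by simp
  also have "(a + (b+k) mod int n) mod int n = (a+b+k) mod int n"
    by (simp add: mod_add_right_eq add.assoc)
  finally show ?thesis .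
qed

lemma shift_carrier: "Y_shift n R b1 b2 m \<in> carrier (homeo_group Y)"
proof -
  have "homeomorphic_maps Y Y (Y_shift n R b1 b2 m) (Y_shift n R b1 b2 (-m))"
    unfolding homeomorphic_maps_def
  proof (intro conjI ballI)
    show "continuous_map Y Y (Y_shift n R b1 b2 m)" by (rule cont_shift)
    show "continuous_map Y Y (Y_shift n R b1 b2 (-m))" by (rule cont_shift)
  next
    fix c assume "c \<in> topspace Y"
    then obtain k x where kx: "k \<in> rng" "x \<in> R" "c = e k x" using quot_e by blast
    show "Y_shift n R b1 b2 (-m) (Y_shift n R b1 b2 m c) = c"
      using shift_shift[OF kx(1,2)] kx by simp
  next
    fix c assume "c \<in> topspace Y"
    then obtain k x where kx: "k \<in> rng" "x \<in> R" "c = e k x" using quot_e by blast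
    show "Y_shift n R b1 b2 m (Y_shift n R b1 b2 (-m) c) = c"
      using shift_shift[OF kx(1,2)] kx by simp
  qed
  then have "homeomorphic_map Y Y (Y_shift n R b1 b2 m)" using homeomorphic_map_maps by blast
  then show ?thesis unfolding homeo_group_def using Y_shift_ext[of m] by simp
qed

lemma shift_mult: assumes "a \<in> rng" "b \<in> rng"
  shows "Y_shift n R b1 b2 ((a+b) mod int n) = compose (topspace Y) (Y_shift n R b1 b2 a) (Y_shift n R b1 b2 b)"
proof
  fix c show "Y_shift n R b1 b2 ((a+b) mod int n) c = compose (topspace Y) (Y_shift n R b1 b2 a) (Y_shift n R b1 b2 b) c"
  proof (cases "c \<in> topspace Y")
    case True
    then obtain k x where kx: "k \<in> rng" "x \<in> R" "c = e k x" using quot_e by blast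
    have "((a+b) mod int n + k) mod int n = (a+b+k) mod int n" by (simp add: mod_add_left_eq)
    then show ?thesis using shift_shift[OF kx(1,2)] Y_shift_e[OF kx(1,2)] kx True
      by (simp add: compose_def)
  next
    case False
    then show ?thesis using Y_shift_ext unfolding extensional_def compose_def by simp
  qed
qed

lemma shift_inj: "inj_on (Y_shift n R b1 b2) rng"
proof
  fix a b assume ab: "a \<in> rng" "b \<in> rng" "Y_shift n R b1 b2 a = Y_shift n R b1 b2 b"
  obtain z where z: "z \<in> R" "z \<noteq> b1" "z \<noteq> b2" using R_interior by blast
  have r0: "0 \<in> rng" using n2 by simp
  have "e ((a+0) mod int n) z = e ((b+0) mod int n) z" using Y_shift_e[OF r0 z(1)] ab(3) by metis
  then have "e a z = e b z" using ab by simp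
  then show "a = b" using e_eq[OF ab(1,2) z(1) z(1)] z by simp
qed

lemma iso_main: "Y_shift n R b1 b2 \<in> iso (integer_mod_group n) (homeo_group Y)"
proof -
  have cG: "carrier (integer_mod_group n) = rng" using n2 by (simp add: integer_mod_group_def)
  have mG: "x \<otimes>\<^bsub>integer_mod_group n\<^esub> y = (x+y) mod int n" for x y
    using n2 by (simp add: integer_mod_group_def)
  have mH: "g \<otimes>\<^bsub>homeo_group Y\<^esub> h = compose (topspace Y) g h" for g h
    by (simp add: homeo_group_def)
  have hom: "Y_shift n R b1 b2 \<in> hom (integer_mod_group n) (homeo_group Y)"
    unfolding hom_def cG mG mH using shift_carrier shift_mult by auto
  have img: "Y_shift n R b1 b2 ` rng = carrier (homeo_group Y)"
    using shift_carrier homeo_shift by blast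
  show ?thesis unfolding iso_def using hom shift_inj img cG by (simp add: bij_betw_def)
qed

end

theorem mainTheorem2:
  fixes R :: "'a::metric_space set" and b1 b2 :: 'a and n :: nat
  assumes "n > 2"
    and "de_Groot_continuum R"
    and "b1 \<in> R" and "b2 \<in> R" and "b1 \<noteq> b2"
  shows "continuum_space (Y_space n R b1 b2) \<and>
         Y_shift n R b1 b2 \<in> iso (integer_mod_group n) (homeo_group (Y_space n R b1 b2))"
proof -
  interpret YC n R b1 b2 using assms by unfold_locales
  show ?thesis using continuum iso_main by simp
qed

end
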